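(* Let $n \ge 1$, let $\mathcal{W}$ be a finite set (a vocabulary of words), and let $\phi : \mathcal{W} \to \mathbb{H}^n$ be a map (a word embedding) into the hyperboloid model of $n$-dimensional hyperbolic space with distance $d$. Fix $\varepsilon > 0$ such that $\int_{\mathbb{H}^n} \exp(-\varepsilon\, d(z, x))\, dz < \infty$ for $x \in \mathbb{H}^n$, where $dz$ is the Riemannian volume measure of $\mathbb{H}^n$. Define the randomized mechanism $M : \mathcal{W} \to \mathcal{W}$ as follows: on input $w$, sample $z \in \mathbb{H}^n$ from the probability density (with respect to $dz$) proportional to $\exp(-\varepsilon\, d(z, \phi(w)))$, and output $M(w) = \hat{w} = \mathop{argmin}_{u \in \mathcal{W}} d(\phi(u), z)$ (ties broken by a fixed deterministic rule). Then for all $w, w', \hat{w} \in \mathcal{W}$, $$\Pr[M(w) = \hat{w}] \le \exp\big(\varepsilon\, d(\phi(w), \phi(w'))\big)\, \Pr[M(w') = \hat{w}],$$ i.e. $M$ is $\varepsilon d_\chi$-private with respect to the hyperbolic distance between word embeddings.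
   Context: The Lorentzian inner product on $\mathbb{R}^{n+1}$ is $\langle u, v\rangle_{\mathcal{L}} = -u_0 v_0 + \sum_{i=1}^n u_i v_i$. The hyperboloid (Lorentz) model of hyperbolic space is $\mathbb{H}^n = \{u \in \mathbb{R}^{n+1} : \langle u, u\rangle_{\mathcal{L}} = -1,\ u_0 > 0\}$, with distance $d(u,v) = \operatorname{arcosh}(-\langle u, v\rangle_{\mathcal{L}})$. A randomized mechanism $M$ on a set equipped with a metric $d_\chi$ is called $\varepsilon d_\chi$-private if $\Pr[M(x) = y] \le e^{\varepsilon d_\chi(x,x')} \Pr[M(x') = y]$ for all inputs $x, x'$ and outputs $y$. *)

theory Defs
  imports "HOL-Analysis.Analysis" "HOL-Probability.Probability"
begin

text \<open>Points of R^(n+1) are pairs (u0, u) with u0 real and u in an n-dimensional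
  Euclidean space 'a (n = DIM('a) >= 1).\<close>

definition lorentz_inner :: "real \<times> 'a::euclidean_space \<Rightarrow> real \<times> 'a \<Rightarrow> real" where
  "lorentz_inner u v = - fst u * fst v + snd u \<bullet> snd v"

definition hyperboloid :: "(real \<times> 'a::euclidean_space) set" where
  "hyperboloid = {u. lorentz_inner u u = -1 \<and> fst u > 0}"

definition hyp_dist :: "real \<times> 'a::euclidean_space \<Rightarrow> real \<times> 'a \<Rightarrow> real" where
  "hyp_dist u v = arcosh (- lorentz_inner u v)"

definition hyp_lift :: "'a::euclidean_space \<Rightarrow> real \<times> 'a" where
  "hyp_lift x = (sqrt (1 + (norm x)\<^sup>2), x)"

text \<open>Riemannian volume measure of the hyperboloid (as a measure on R^(n+1), supported
  on the hyperboloid): in the chart above the induced metric is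
  g = I - x x^T / (1+|x|^2), with sqrt(det g) = 1 / sqrt(1+|x|^2).\<close>
definition hyp_volume :: "(real \<times> 'a::euclidean_space) measure" where
  "hyp_volume = distr (density lborel (\<lambda>x::'a. ennreal (1 / sqrt (1 + (norm x)\<^sup>2)))) borel hyp_lift"

definition hyp_laplace_norm :: "real \<Rightarrow> real \<times> 'a::euclidean_space \<Rightarrow> ennreal" where
  "hyp_laplace_norm eps x = (\<integral>\<^sup>+ z. ennreal (exp (- eps * hyp_dist z x)) \<partial>hyp_volume)"

definition hyp_laplace :: "real \<Rightarrow> real \<times> 'a::euclidean_space \<Rightarrow> (real \<times> 'a) measure" where
  "hyp_laplace eps x = density hyp_volume
     (\<lambda>z. ennreal (exp (- eps * hyp_dist z x)) / hyp_laplace_norm eps x)"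

definition nearest_word :: "'w::linorder set \<Rightarrow> ('w \<Rightarrow> real \<times> 'a::euclidean_space) \<Rightarrow> real \<times> 'a \<Rightarrow> 'w" where
  "nearest_word W \<phi> z = Min {u \<in> W. \<forall>v \<in> W. hyp_dist (\<phi> u) z \<le> hyp_dist (\<phi> v) z}"

definition mech_prob :: "real \<Rightarrow> 'w::linorder set \<Rightarrow> ('w \<Rightarrow> real \<times> 'a::euclidean_space) \<Rightarrow> 'w \<Rightarrow> 'w \<Rightarrow> real" where
  "mech_prob eps W \<phi> w w_hat =
     measure (hyp_laplace eps (\<phi> w)) {z \<in> space (hyp_laplace eps (\<phi> w)). nearest_word W \<phi> z = w_hat}"

end

theory Submission
  imports Defs
begin

definition boost :: "real \<Rightarrow> 'a::euclidean_space \<Rightarrow> real \<times> 'a \<Rightarrow> real \<times> 'a" where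
  "boost a b u = (cosh a * fst u + sinh a * (snd u \<bullet> b),
     snd u + (sinh a * fst u + cosh a * (snd u \<bullet> b) - snd u \<bullet> b) *\<^sub>R b)"

lemma lorentz_inner_sym: "lorentz_inner u v = lorentz_inner v u"
  by (simp add: lorentz_inner_def inner_commute)

lemma boost_alg:
  fixes c s t t' p p' :: real
  assumes "c^2 = s^2 + 1"
  shows "- (c*t + s*p) * (c*t' + s*p') + ((s*t + c*p - p) * p' + (s*t' + c*p' - p') * p
     + (s*t + c*p - p) * (s*t' + c*p' - p')) = - t * t'"
proof -
  have "- (c*t + s*p) * (c*t' + s*p') + ((s*t + c*p - p) * p' + (s*t' + c*p' - p') * p
     + (s*t + c*p - p) * (s*t' + c*p' - p')) = (s^2 - c^2) * (t*t') + (c^2 - s^2 - 1) * (p * p')"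
    by (simp add: algebra_simps power2_eq_square)
  also have "\<dots> = - t * t'" using assms by simp
  finally show ?thesis .
qed

lemma inner_upd:
  assumes b: "b \<in> Basis"
  shows "(y + d *\<^sub>R b) \<bullet> (y' + d' *\<^sub>R b) = y \<bullet> y' + (d * (y' \<bullet> b) + d' * (y \<bullet> b) + d * d')"
proof -
  have bb: "b \<bullet> b = 1" using b by simp
  have "b \<bullet> y' = y' \<bullet> b" by (rule inner_commute)
  then show ?thesis
    by (simp add: inner_add_left inner_add_right bb distrib_left)
qed

lemma boost_lorentz:
  assumes b: "b \<in> Basis"
  shows "lorentz_inner (boost a b u) (boost a b v) = lorentz_inner u v"
proof -
  obtain t y where u: "u = (t, y)" by (cases u)
  obtain t' y' where v: "v = (t', y')" by (cases v)
  have "lorentz_inner (boost a b u) (boost a b v) =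
    - (cosh a*t + sinh a*(y\<bullet>b)) * (cosh a*t' + sinh a*(y'\<bullet>b)) + (y \<bullet> y' +
     ((sinh a*t + cosh a*(y\<bullet>b) - (y\<bullet>b)) * (y'\<bullet>b) + (sinh a*t' + cosh a*(y'\<bullet>b) - (y'\<bullet>b)) * (y\<bullet>b)
     + (sinh a*t + cosh a*(y\<bullet>b) - (y\<bullet>b)) * (sinh a*t' + cosh a*(y'\<bullet>b) - (y'\<bullet>b))))"
    unfolding u v boost_def lorentz_inner_def fst_conv snd_conv inner_upd[OF b] by simp
  also have "\<dots> = -t*t' + y \<bullet> y'"
    using boost_alg[OF cosh_square_eq, of a t "y\<bullet>b" t' "y'\<bullet>b"] by linarith
  finally show ?thesis unfolding u v lorentz_inner_def by simp
qed

lemma hyp_mem: "u \<in> hyperboloid \<longleftrightarrow> fst u = sqrt (1 + (norm (snd u))\<^sup>2)"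
proof -
  obtain t y where u: "u = (t, y)" by (cases u)
  have "lorentz_inner u u = - (t^2) + (norm y)^2"
    by (simp add: u lorentz_inner_def power2_norm_eq_inner power2_eq_square[of t])
  then have "u \<in> hyperboloid \<longleftrightarrow> t^2 = 1 + (norm y)^2 \<and> t > 0"
    by (auto simp: hyperboloid_def u)
  also have "\<dots> \<longleftrightarrow> t = sqrt (1 + (norm y)^2)"
  proof
    assume "t^2 = 1 + (norm y)^2 \<and> t > 0"
    then show "t = sqrt (1 + (norm y)^2)" by (metis less_imp_le real_sqrt_unique)
  next
    assume "t = sqrt (1 + (norm y)^2)"
    then show "t^2 = 1 + (norm y)^2 \<and> t > 0"
      by (simp add: add_pos_nonneg)
  qed
  finally show ?thesis by (simp add: u)
qed

lemma hyp_lift_mem: "hyp_lift y \<in> hyperboloid"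
  by (simp add: hyp_mem hyp_lift_def)

lemma hyp_mem_lift: "u \<in> hyperboloid \<Longrightarrow> hyp_lift (snd u) = u"
  by (cases u) (simp add: hyp_mem hyp_lift_def)

lemma hyp_fst_gt: "u \<in> hyperboloid \<Longrightarrow> fst u > norm (snd u)"
  by (simp add: hyp_mem real_less_rsqrt)

lemma hyp_fst_ge1: "u \<in> hyperboloid \<Longrightarrow> fst u \<ge> 1"
  by (simp add: hyp_mem)

lemma cosh_gt_abs_sinh: "cosh (a::real) > \<bar>sinh a\<bar>"
proof -
  have "\<bar>sinh a\<bar>^2 < cosh a ^ 2" using cosh_square_eq[of a] by simp
  then show ?thesis using cosh_real_pos[of a] by (meson abs_ge_zero less_le_trans power_less_imp_less_base less_imp_le)
qed

lemma boost_mem: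
  assumes b: "b \<in> Basis" and u: "u \<in> hyperboloid"
  shows "boost a b u \<in> hyperboloid"
proof -
  have li: "lorentz_inner (boost a b u) (boost a b u) = -1"
    using boost_lorentz[OF b, of a u u] u by (simp add: hyperboloid_def)
  have t: "fst u > \<bar>snd u \<bullet> b\<bar>"
    using hyp_fst_gt[OF u] Basis_le_norm[OF b, of "snd u"] by linarith
  have "\<bar>sinh a * (snd u \<bullet> b)\<bar> \<le> \<bar>sinh a\<bar> * fst u"
    using t by (simp add: abs_mult mult_left_mono)
  also have "\<dots> < cosh a * fst u"
    using t cosh_gt_abs_sinh[of a] by (intro mult_strict_right_mono) auto
  finally have "fst (boost a b u) > 0" by (simp add: boost_def)
  with li show ?thesis by (simp add: hyperboloid_def)
qed

lemma boost_fix_coord: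
  assumes b: "b \<in> Basis" and c: "c \<in> Basis" "c \<noteq> b"
  shows "snd (boost a b u) \<bullet> c = snd u \<bullet> c"
  using b c by (simp add: boost_def inner_add_left inner_Basis)

lemma boost_coord_b:
  assumes b: "b \<in> Basis"
  shows "snd (boost a b u) \<bullet> b = sinh a * fst u + cosh a * (snd u \<bullet> b)"
  using b by (simp add: boost_def inner_add_left)

lemma boost_kill:
  assumes b: "b \<in> Basis" and u: "u \<in> hyperboloid"
  shows "snd (boost (- arsinh ((snd u \<bullet> b) / sqrt ((fst u)^2 - (snd u \<bullet> b)^2))) b u) \<bullet> b = 0"
proof -
  define t where "t = fst u"
  define p where "p = snd u \<bullet> b"
  have tp: "t > \<bar>p\<bar>"
    using hyp_fst_gt[OF u] Basis_le_norm[OF b, of "snd u"] unfolding t_def p_def by linarith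
  define r where "r = sqrt (t^2 - p^2)"
  have "p^2 < t^2" using tp by (metis abs_ge_zero abs_less_iff abs_power2 power_strict_mono zero_less_numeral power2_abs)
  then have r: "r > 0" by (simp add: r_def)
  have r2: "r^2 = t^2 - p^2" using \<open>p^2 < t^2\<close> by (simp add: r_def)
  have "(p / r)^2 + 1 = (t / r)^2" using r r2 by (simp add: field_simps power_divide)
  then have ch: "cosh (arsinh (p / r)) = t / r"
    using tp r by (simp add: cosh_arsinh_real real_sqrt_unique)
  have "sinh (- arsinh (p / r)) * t + cosh (- arsinh (p / r)) * p = 0"
    using ch r by (simp add: field_simps)
  then show ?thesis unfolding boost_coord_b[OF b]
    by (simp add: t_def p_def r_def)
qed

lemma reach:
  fixes G :: "((real \<times> 'a::euclidean_space) \<Rightarrow> (real \<times> 'a)) set"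
  assumes idG: "id \<in> G"
    and stepG: "\<And>g a b. g \<in> G \<Longrightarrow> b \<in> Basis \<Longrightarrow> g \<circ> boost a b \<in> G"
    and x: "x \<in> hyperboloid"
  shows "\<exists>g\<in>G. g x = (1, 0)"
proof -
  have "\<forall>x. x \<in> hyperboloid \<longrightarrow> card {b\<in>Basis. snd x \<bullet> b \<noteq> 0} = n \<longrightarrow> (\<exists>g\<in>G. g x = (1, 0))" for n
  proof (induction n rule: less_induct)
    case (less n)
    show ?case
    proof (intro allI impI)
      fix x :: "real \<times> 'a"
      assume x: "x \<in> hyperboloid" and n: "card {b\<in>Basis. snd x \<bullet> b \<noteq> 0} = n"
      show "\<exists>g\<in>G. g x = (1, 0)"
      proof (cases "{b\<in>Basis. snd x \<bullet> b \<noteq> 0} = {}")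
        case True
        have "snd x = 0"
        proof (rule euclidean_eqI)
          fix c :: 'a assume "c \<in> Basis"
          then show "snd x \<bullet> c = 0 \<bullet> c" using True by auto
        qed
        moreover have "fst x = 1" using hyp_mem[of x] x \<open>snd x = 0\<close> by simp
        ultimately have "x = (1, 0)" by (simp add: prod_eq_iff)
        then have "id x = (1, 0)" by simp
        then show ?thesis using idG by blast
      next
        case False
        then obtain b where b: "b \<in> Basis" "snd x \<bullet> b \<noteq> 0" by auto
        define a where "a = - arsinh ((snd x \<bullet> b) / sqrt ((fst x)^2 - (snd x \<bullet> b)^2))"
        define x' where "x' = boost a b x"
        have x': "x' \<in> hyperboloid" using boost_mem[OF b(1) x] by (simp add: x'_def)
        have sub: "{c\<in>Basis. snd x' \<bullet> c \<noteq> 0} \<subset> {c\<in>Basis. snd x \<bullet> c \<noteq> 0}"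
        proof -
          have "snd x' \<bullet> b = 0" using boost_kill[OF b(1) x] by (simp add: x'_def a_def)
          moreover have "snd x' \<bullet> c = snd x \<bullet> c" if "c \<in> Basis" "c \<noteq> b" for c
            using boost_fix_coord[OF b(1) that] by (simp add: x'_def)
          ultimately show ?thesis using b by (auto, metis)
        qed
        then have lt: "card {c\<in>Basis. snd x' \<bullet> c \<noteq> 0} < n"
          using n psubset_card_mono[OF _ sub] by simp
        obtain g where g: "g \<in> G" "g x' = (1, 0)"
          using less.IH[OF lt] x' by blast
        have "(g \<circ> boost a b) x = (1, 0)" using g(2) by (simp add: x'_def)
        then show ?thesis using stepG[OF g(1) b(1), of a] by blast
      qed
    qed
  qed
  then show ?thesis using x by blast
qed


lemma nn_int_SUP_ind:
  fixes f :: "real \<Rightarrow> ennreal" and I :: "nat \<Rightarrow> real set"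
  assumes [measurable]: "f \<in> borel_measurable borel" "\<And>n. I n \<in> sets borel"
    and mono: "\<And>n. I n \<subseteq> I (Suc n)" and cover: "\<And>x. \<exists>n. x \<in> I n"
  shows "(SUP n. \<integral>\<^sup>+ x. f x * indicator (I n) x \<partial>lborel) = (\<integral>\<^sup>+ x. f x \<partial>lborel)"
proof -
  have inc: "incseq (\<lambda>n x. f x * indicator (I n) x)"
  proof (intro incseq_SucI le_funI)
    fix n x
    show "f x * indicator (I n) x \<le> f x * indicator (I (Suc n)) x"
      using mono[of n] by (intro mult_left_mono) (auto split: split_indicator)
  qed
  have "(\<integral>\<^sup>+ x. f x \<partial>lborel) = (\<integral>\<^sup>+ x. (SUP n. f x * indicator (I n) x) \<partial>lborel)"
  proof (rule nn_integral_cong)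
    fix x
    obtain m where m: "x \<in> I m" using cover by blast
    show "f x = (SUP n. f x * indicator (I n) x)"
    proof (rule antisym)
      show "f x \<le> (SUP n. f x * indicator (I n) x)"
        using m by (intro SUP_upper2[of m]) auto
      show "(SUP n. f x * indicator (I n) x) \<le> f x"
        by (rule SUP_least) (auto split: split_indicator)
    qed
  qed
  also have "\<dots> = (SUP n. \<integral>\<^sup>+ x. f x * indicator (I n) x \<partial>lborel)"
    by (rule nn_integral_monotone_convergence_SUP[OF inc]) measurable
  finally show ?thesis ..
qed

lemma subst_sinh:
  fixes K :: "real \<Rightarrow> ennreal"
  assumes K[measurable]: "K \<in> borel_measurable borel" and r: "r > 0"
  shows "(\<integral>\<^sup>+ s. ennreal (1 / sqrt (r^2 + s^2)) * K s \<partial>lborel) = (\<integral>\<^sup>+ t. K (r * sinh t) \<partial>lborel)"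
proof -
  define B where "B n = arsinh ((real n + 1) / r)" for n :: nat
  define f where "f s = ennreal (1 / sqrt (r^2 + s^2)) * K s" for s
  have f[measurable]: "f \<in> borel_measurable borel" unfolding f_def by measurable
  have sm[measurable]: "(\<lambda>t. r * sinh t) \<in> borel_measurable borel"
    by (intro borel_measurable_continuous_onI continuous_intros)
  have Bpos: "B n > 0" for n using r by (simp add: B_def)
  have gB: "r * sinh (B n) = real n + 1" for n using r by (simp add: B_def)
  have eq: "(\<integral>\<^sup>+ s. f s * indicator {-(real n + 1) .. real n + 1} s \<partial>lborel)
      = (\<integral>\<^sup>+ t. K (r * sinh t) * indicator {- B n .. B n} t \<partial>lborel)" for n
  proof -
    have "(\<integral>\<^sup>+ s. f s * indicator {r * sinh (- B n) .. r * sinh (B n)} s \<partial>lborel)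
       = (\<integral>\<^sup>+ t. f (r * sinh t) * ennreal (r * cosh t) * indicator {- B n .. B n} t \<partial>lborel)"
      by (rule nn_integral_substitution_aux[OF f])
         (auto intro!: derivative_eq_intros continuous_intros simp: Bpos r less_imp_le)
    also have "\<dots> = (\<integral>\<^sup>+ t. K (r * sinh t) * indicator {- B n .. B n} t \<partial>lborel)"
    proof (rule nn_integral_cong)
      fix t
      have c: "sqrt (r^2 + (r * sinh t)^2) = r * cosh t"
      proof -
        have "r^2 + (r * sinh t)^2 = (r * cosh t)^2"
          by (simp add: power_mult_distrib cosh_square_eq algebra_simps)
        then show ?thesis using r by (simp add: less_imp_le)
      qed
      have "ennreal (1 / sqrt (r^2 + (r * sinh t)^2)) * ennreal (r * cosh t) = 1"
        unfolding c using r by (simp add: ennreal_mult[symmetric] less_imp_le)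
      then show "f (r * sinh t) * ennreal (r * cosh t) * indicator {- B n .. B n} t
          = K (r * sinh t) * indicator {- B n .. B n} t"
        unfolding f_def by (metis (no_types, lifting) mult.assoc mult.commute mult.left_neutral)
    qed
    finally show ?thesis using gB[of n] by simp
  qed
  have "(\<integral>\<^sup>+ s. f s \<partial>lborel) = (SUP n. \<integral>\<^sup>+ s. f s * indicator {-(real n + 1) .. real n + 1} s \<partial>lborel)"
  proof (rule nn_int_SUP_ind[symmetric])
    fix x :: real
    obtain n where "\<bar>x\<bar> \<le> real n" using real_arch_simple by blast
    then show "\<exists>n. x \<in> {-(real n + 1) .. real n + 1}" by (intro exI[of _ n]) auto
  qed auto
  also have "\<dots> = (SUP n. \<integral>\<^sup>+ t. K (r * sinh t) * indicator {- B n .. B n} t \<partial>lborel)"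
    using eq by simp
  also have "\<dots> = (\<integral>\<^sup>+ t. K (r * sinh t) \<partial>lborel)"
  proof (rule nn_int_SUP_ind)
    fix n
    have "B n < B (Suc n)" using r by (simp add: B_def divide_strict_right_mono)
    then show "{- B n .. B n} \<subseteq> {- B (Suc n) .. B (Suc n)}" by auto
  next
    fix x :: real
    obtain n where n: "r * sinh \<bar>x\<bar> \<le> real n" using real_arch_simple by blast
    have "\<bar>x\<bar> \<le> B n"
    proof -
      have "sinh \<bar>x\<bar> \<le> (real n + 1) / r" using n r by (simp add: field_simps)
      then have "arsinh (sinh \<bar>x\<bar>) \<le> B n" unfolding B_def
        by (metis arsinh_less_iff_real not_less)
      then show ?thesis by (metis arsinh_sinh_real)
    qed
    then show "\<exists>n. x \<in> {- B n .. B n}" by (intro exI[of _ n]) auto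
  qed (auto intro: measurable_compose[OF sm K])
  finally show ?thesis by (simp add: f_def)
qed


definition rho :: "'a::euclidean_space \<Rightarrow> ennreal" where
  "rho y = ennreal (1 / sqrt (1 + (norm y)\<^sup>2))"

definition beta :: "real \<Rightarrow> 'a::euclidean_space \<Rightarrow> 'a \<Rightarrow> 'a" where
  "beta a b y = y + (sinh a * sqrt (1 + (norm y)\<^sup>2) + cosh a * (y \<bullet> b) - y \<bullet> b) *\<^sub>R b"

lemma rho_meas[measurable]: "rho \<in> borel_measurable borel"
  unfolding rho_def by measurable

lemma beta_meas[measurable]: "beta a b \<in> borel_measurable borel"
  unfolding beta_def by (intro borel_measurable_continuous_onI continuous_intros)

lemma boost_lift: "snd (boost a b (hyp_lift y)) = beta a b y"
  by (simp add: boost_def hyp_lift_def beta_def)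

lemma lborel_split:
  fixes F :: "'a::euclidean_space \<Rightarrow> ennreal" and b :: 'a
  assumes b: "b \<in> Basis" and F[measurable]: "F \<in> borel_measurable borel"
  shows "(\<integral>\<^sup>+ y. F y \<partial>lborel) = (\<integral>\<^sup>+ x. (\<integral>\<^sup>+ s. F ((\<Sum>c\<in>Basis-{b}. x c *\<^sub>R c) + s *\<^sub>R b) \<partial>lborel) \<partial>(\<Pi>\<^sub>M c\<in>Basis-{b}. lborel))"
proof -
  interpret P: product_sigma_finite "\<lambda>_::'a. lborel::real measure"
    by (simp add: product_sigma_finite_def sigma_finite_lborel)
  have meas: "(\<lambda>f. \<Sum>c\<in>Basis. f c *\<^sub>R c) \<in> measurable (\<Pi>\<^sub>M c\<in>(Basis::'a set). lborel) borel"
    by measurable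
  have L: "(lborel :: 'a measure) = distr (\<Pi>\<^sub>M c\<in>Basis. lborel) borel (\<lambda>f. \<Sum>c\<in>Basis. f c *\<^sub>R c)"
    by (rule lborel_eq)
  have "(\<integral>\<^sup>+ y. F y \<partial>lborel) = (\<integral>\<^sup>+ f. F (\<Sum>c\<in>Basis. f c *\<^sub>R c) \<partial>(\<Pi>\<^sub>M c\<in>Basis. lborel))"
    by (subst L) (simp add: nn_integral_distr meas)
  also have "\<dots> = (\<integral>\<^sup>+ f. F (\<Sum>c\<in>Basis. f c *\<^sub>R c) \<partial>(\<Pi>\<^sub>M c\<in>insert b (Basis-{b}). lborel))"
    using b by (simp add: insert_absorb)
  also have "\<dots> = (\<integral>\<^sup>+ x. (\<integral>\<^sup>+ s. F (\<Sum>c\<in>Basis. (x(b := s)) c *\<^sub>R c) \<partial>lborel) \<partial>(\<Pi>\<^sub>M c\<in>Basis-{b}. lborel))"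
  proof (rule P.product_nn_integral_insert)
    show "(\<lambda>f. F (\<Sum>c\<in>Basis. f c *\<^sub>R c)) \<in> borel_measurable (\<Pi>\<^sub>M c\<in>insert b (Basis-{b}). lborel)"
      using b meas by (simp add: insert_absorb)
  qed auto
  also have "\<dots> = (\<integral>\<^sup>+ x. (\<integral>\<^sup>+ s. F ((\<Sum>c\<in>Basis-{b}. x c *\<^sub>R c) + s *\<^sub>R b) \<partial>lborel) \<partial>(\<Pi>\<^sub>M c\<in>Basis-{b}. lborel))"
  proof (intro nn_integral_cong)
    fix x :: "'a \<Rightarrow> real" and s :: real
    have "(\<Sum>c\<in>Basis. (x(b := s)) c *\<^sub>R c) = (x(b := s)) b *\<^sub>R b + (\<Sum>c\<in>Basis-{b}. (x(b := s)) c *\<^sub>R c)"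
      by (rule sum.remove[OF finite_Basis b])
    also have "(\<Sum>c\<in>Basis-{b}. (x(b := s)) c *\<^sub>R c) = (\<Sum>c\<in>Basis-{b}. x c *\<^sub>R c)"
      by (rule sum.cong) auto
    finally show "F (\<Sum>c\<in>Basis. (x(b := s)) c *\<^sub>R c) = F ((\<Sum>c\<in>Basis-{b}. x c *\<^sub>R c) + s *\<^sub>R b)"
      by (simp add: add.commute)
  qed
  finally show ?thesis .
qed

lemma inner1:
  fixes k :: "'a::euclidean_space \<Rightarrow> ennreal"
  assumes b: "b \<in> Basis" and v: "v \<bullet> b = 0" and k[measurable]: "k \<in> borel_measurable borel"
  shows "(\<integral>\<^sup>+ s. rho (v + s *\<^sub>R b) * k (beta a b (v + s *\<^sub>R b)) \<partial>lborel)
       = (\<integral>\<^sup>+ s. rho (v + s *\<^sub>R b) * k (v + s *\<^sub>R b) \<partial>lborel)"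
proof -
  define r where "r = sqrt (1 + (norm v)^2)"
  have r: "r > 0" by (simp add: r_def add_pos_nonneg)
  have r2: "r^2 = 1 + (norm v)^2" by (simp add: r_def)
  have n2: "(norm (v + s *\<^sub>R b))^2 = (norm v)^2 + s^2" for s
    using inner_upd[OF b, of v s v s] v unfolding power2_norm_eq_inner by (simp add: power2_eq_square[of s])
  have rho: "rho (v + s *\<^sub>R b) = ennreal (1 / sqrt (r^2 + s^2))" for s
    unfolding rho_def n2 r2 by (simp add: add.assoc)
  have vb: "(v + s *\<^sub>R b) \<bullet> b = s" for s using b v by (simp add: inner_add_left)
  define phi where "phi s = sinh a * sqrt (r^2 + s^2) + cosh a * s" for s
  have beta: "beta a b (v + s *\<^sub>R b) = v + phi s *\<^sub>R b" for s
    unfolding beta_def vb n2 phi_def r2 by (simp add: add.assoc algebra_simps)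
  have phi: "phi (r * sinh t) = r * sinh (t + a)" for t
  proof -
    have "r^2 + (r * sinh t)^2 = (r * cosh t)^2"
      by (simp add: power_mult_distrib cosh_square_eq algebra_simps)
    then have "sqrt (r^2 + (r * sinh t)^2) = r * cosh t" using r by (simp add: less_imp_le)
    then show ?thesis unfolding phi_def by (simp add: sinh_add algebra_simps)
  qed
  have cont_line: "continuous_on UNIV (\<lambda>s. v + s *\<^sub>R b)" by (intro continuous_intros)
  have m1[measurable]: "(\<lambda>s. k (v + s *\<^sub>R b)) \<in> borel_measurable borel"
    by (rule measurable_compose[OF borel_measurable_continuous_onI[OF cont_line] k])
  have cont_phi: "continuous_on UNIV (\<lambda>s. v + phi s *\<^sub>R b)"
    unfolding phi_def by (intro continuous_intros)
  have m2[measurable]: "(\<lambda>s. k (v + phi s *\<^sub>R b)) \<in> borel_measurable borel"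
    by (rule measurable_compose[OF borel_measurable_continuous_onI[OF cont_phi] k])
  have sm: "(\<lambda>t. r * sinh t) \<in> borel_measurable borel"
    by (intro borel_measurable_continuous_onI continuous_intros)
  have m3[measurable]: "(\<lambda>t. k (v + (r * sinh t) *\<^sub>R b)) \<in> borel_measurable borel"
    using measurable_compose[OF sm m1] by simp
  have "(\<integral>\<^sup>+ s. rho (v + s *\<^sub>R b) * k (beta a b (v + s *\<^sub>R b)) \<partial>lborel)
      = (\<integral>\<^sup>+ s. ennreal (1 / sqrt (r^2 + s^2)) * k (v + phi s *\<^sub>R b) \<partial>lborel)"
    by (simp add: rho beta)
  also have "\<dots> = (\<integral>\<^sup>+ t. k (v + phi (r * sinh t) *\<^sub>R b) \<partial>lborel)"
    by (rule subst_sinh[OF m2 r])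
  also have "\<dots> = (\<integral>\<^sup>+ t. k (v + (r * sinh (a + 1 * t)) *\<^sub>R b) \<partial>lborel)"
    by (simp add: phi add.commute)
  also have "\<dots> = (\<integral>\<^sup>+ t. k (v + (r * sinh t) *\<^sub>R b) \<partial>lborel)"
    using nn_integral_real_affine[OF m3, of 1 a] by simp
  also have "\<dots> = (\<integral>\<^sup>+ s. ennreal (1 / sqrt (r^2 + s^2)) * k (v + s *\<^sub>R b) \<partial>lborel)"
    by (rule subst_sinh[OF m1 r, symmetric])
  also have "\<dots> = (\<integral>\<^sup>+ s. rho (v + s *\<^sub>R b) * k (v + s *\<^sub>R b) \<partial>lborel)"
    by (simp add: rho)
  finally show ?thesis .
qed

lemma chart_boost:
  fixes k :: "'a::euclidean_space \<Rightarrow> ennreal"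
  assumes b: "b \<in> Basis" and k[measurable]: "k \<in> borel_measurable borel"
  shows "(\<integral>\<^sup>+ y. rho y * k (beta a b y) \<partial>lborel) = (\<integral>\<^sup>+ y. rho y * k y \<partial>lborel)"
proof -
  have "(\<integral>\<^sup>+ y. rho y * k (beta a b y) \<partial>lborel)
    = (\<integral>\<^sup>+ x. (\<integral>\<^sup>+ s. rho ((\<Sum>c\<in>Basis-{b}. x c *\<^sub>R c) + s *\<^sub>R b) * k (beta a b ((\<Sum>c\<in>Basis-{b}. x c *\<^sub>R c) + s *\<^sub>R b)) \<partial>lborel) \<partial>(\<Pi>\<^sub>M c\<in>Basis-{b}. lborel))"
    by (rule lborel_split[OF b]) measurable
  also have "\<dots> = (\<integral>\<^sup>+ x. (\<integral>\<^sup>+ s. rho ((\<Sum>c\<in>Basis-{b}. x c *\<^sub>R c) + s *\<^sub>R b) * k ((\<Sum>c\<in>Basis-{b}. x c *\<^sub>R c) + s *\<^sub>R b) \<partial>lborel) \<partial>(\<Pi>\<^sub>M c\<in>Basis-{b}. lborel))"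
  proof (rule nn_integral_cong)
    fix x :: "'a \<Rightarrow> real"
    have "(\<Sum>c\<in>Basis-{b}. x c *\<^sub>R c) \<bullet> b = 0"
      using b by (simp add: inner_sum_left inner_Basis)
    then show "(\<integral>\<^sup>+ s. rho ((\<Sum>c\<in>Basis-{b}. x c *\<^sub>R c) + s *\<^sub>R b) * k (beta a b ((\<Sum>c\<in>Basis-{b}. x c *\<^sub>R c) + s *\<^sub>R b)) \<partial>lborel)
      = (\<integral>\<^sup>+ s. rho ((\<Sum>c\<in>Basis-{b}. x c *\<^sub>R c) + s *\<^sub>R b) * k ((\<Sum>c\<in>Basis-{b}. x c *\<^sub>R c) + s *\<^sub>R b) \<partial>lborel)"
      by (rule inner1[OF b _ k])
  qed
  also have "\<dots> = (\<integral>\<^sup>+ y. rho y * k y \<partial>lborel)"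
    by (rule lborel_split[OF b, symmetric]) measurable
  finally show ?thesis .
qed

lemma hyp_lift_meas[measurable]: "hyp_lift \<in> borel_measurable borel"
  unfolding hyp_lift_def by (intro borel_measurable_continuous_onI continuous_intros)

lemma hyp_volume_chart:
  fixes h :: "real \<times> 'a::euclidean_space \<Rightarrow> ennreal"
  assumes [measurable]: "h \<in> borel_measurable borel"
  shows "(\<integral>\<^sup>+ z. h z \<partial>hyp_volume) = (\<integral>\<^sup>+ y. rho y * h (hyp_lift y) \<partial>lborel)"
  unfolding hyp_volume_def
  by (simp add: nn_integral_distr nn_integral_density rho_def[symmetric])

lemma boost_meas[measurable]: "boost a b \<in> borel_measurable borel"
  unfolding boost_def by (intro borel_measurable_continuous_onI continuous_intros)

lemma boost_volume:
  fixes h :: "real \<times> 'a::euclidean_space \<Rightarrow> ennreal"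
  assumes b: "b \<in> Basis" and h[measurable]: "h \<in> borel_measurable borel"
  shows "(\<integral>\<^sup>+ z. h (boost a b z) \<partial>hyp_volume) = (\<integral>\<^sup>+ z. h z \<partial>hyp_volume)"
proof -
  have e: "boost a b (hyp_lift y) = hyp_lift (beta a b y)" for y
    using hyp_mem_lift[OF boost_mem[OF b hyp_lift_mem, of a y]] by (simp add: boost_lift)
  have "(\<integral>\<^sup>+ z. h (boost a b z) \<partial>hyp_volume) = (\<integral>\<^sup>+ y. rho y * h (boost a b (hyp_lift y)) \<partial>lborel)"
    by (rule hyp_volume_chart) measurable
  also have "\<dots> = (\<integral>\<^sup>+ y. rho y * (h \<circ> hyp_lift) (beta a b y) \<partial>lborel)"
    by (simp add: e)
  also have "\<dots> = (\<integral>\<^sup>+ y. rho y * (h \<circ> hyp_lift) y \<partial>lborel)"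
    by (rule chart_boost[OF b]) measurable
  also have "\<dots> = (\<integral>\<^sup>+ z. h z \<partial>hyp_volume)"
    by (simp add: hyp_volume_chart)
  finally show ?thesis .
qed


definition hyp_iso :: "(real \<times> 'a::euclidean_space \<Rightarrow> real \<times> 'a) \<Rightarrow> bool" where
  "hyp_iso g \<longleftrightarrow> (\<forall>u v. lorentz_inner (g u) (g v) = lorentz_inner u v) \<and>
     (\<forall>u\<in>hyperboloid. g u \<in> hyperboloid) \<and> g \<in> borel_measurable borel \<and>
     (\<forall>h::real \<times> 'a \<Rightarrow> ennreal. h \<in> borel_measurable borel \<longrightarrow>
        (\<integral>\<^sup>+ z. h (g z) \<partial>hyp_volume) = (\<integral>\<^sup>+ z. h z \<partial>hyp_volume))"

lemma hyp_iso_id: "hyp_iso id"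
  by (simp add: hyp_iso_def)

lemma hyp_iso_step:
  assumes g: "hyp_iso g" and b: "b \<in> Basis"
  shows "hyp_iso (g \<circ> boost a b)"
proof -
  have gm[measurable]: "g \<in> borel_measurable borel" using g by (simp add: hyp_iso_def)
  have "(\<integral>\<^sup>+ z. h (g (boost a b z)) \<partial>hyp_volume) = (\<integral>\<^sup>+ z. h z \<partial>hyp_volume)"
    if hm[measurable]: "h \<in> borel_measurable borel" for h :: "real \<times> 'a \<Rightarrow> ennreal"
  proof -
    have "(\<integral>\<^sup>+ z. h (g (boost a b z)) \<partial>hyp_volume) = (\<integral>\<^sup>+ z. (h \<circ> g) (boost a b z) \<partial>hyp_volume)"
      by simp
    also have "\<dots> = (\<integral>\<^sup>+ z. (h \<circ> g) z \<partial>hyp_volume)"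
      by (rule boost_volume[OF b]) measurable
    also have "\<dots> = (\<integral>\<^sup>+ z. h z \<partial>hyp_volume)"
      using g hm by (simp add: hyp_iso_def)
    finally show ?thesis .
  qed
  moreover have "\<forall>u v. lorentz_inner ((g \<circ> boost a b) u) ((g \<circ> boost a b) v) = lorentz_inner u v"
  proof (intro allI)
    fix u v
    have "lorentz_inner (g (boost a b u)) (g (boost a b v)) = lorentz_inner (boost a b u) (boost a b v)"
      using g unfolding hyp_iso_def by blast
    then show "lorentz_inner ((g \<circ> boost a b) u) ((g \<circ> boost a b) v) = lorentz_inner u v"
      using boost_lorentz[OF b] by simp
  qed
  moreover have "\<forall>u\<in>hyperboloid. (g \<circ> boost a b) u \<in> hyperboloid"
    using g boost_mem[OF b] unfolding hyp_iso_def by simp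
  moreover have "g \<circ> boost a b \<in> borel_measurable borel" by measurable
  ultimately show ?thesis unfolding hyp_iso_def by simp
qed

lemma reach_iso:
  fixes x :: "real \<times> 'a::euclidean_space"
  assumes "x \<in> hyperboloid"
  shows "\<exists>g. hyp_iso g \<and> g x = (1, 0)"
  using reach[of "{g. hyp_iso g}" x] hyp_iso_id hyp_iso_step assms by auto

lemma hyp_iso_lorentz: "hyp_iso g \<Longrightarrow> lorentz_inner (g u) (g v) = lorentz_inner u v"
  unfolding hyp_iso_def by blast

lemma hyp_iso_int: "hyp_iso g \<Longrightarrow> h \<in> borel_measurable borel \<Longrightarrow>
    (\<integral>\<^sup>+ z. h (g z) \<partial>hyp_volume) = (\<integral>\<^sup>+ z. h z \<partial>hyp_volume)"
  unfolding hyp_iso_def by blast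

lemma hyp_iso_dist: "hyp_iso g \<Longrightarrow> hyp_dist (g u) (g v) = hyp_dist u v"
  unfolding hyp_dist_def by (simp add: hyp_iso_lorentz)

lemma lorentz_o: "lorentz_inner u (1, 0) = - fst u"
  by (simp add: lorentz_inner_def)

lemma o_mem: "(1, 0) \<in> hyperboloid"
  by (simp add: hyp_mem)

lemma inner_ge1:
  assumes u: "u \<in> hyperboloid" and v: "v \<in> hyperboloid"
  shows "- lorentz_inner u v \<ge> 1"
proof -
  obtain g where g: "hyp_iso g" "g v = (1, 0)" using reach_iso[OF v] by blast
  have "g u \<in> hyperboloid" using g u by (simp add: hyp_iso_def)
  then have "- lorentz_inner (g u) (g v) \<ge> 1" using g(2) by (simp add: lorentz_o hyp_fst_ge1)
  then show ?thesis using hyp_iso_lorentz[OF g(1)] by simp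
qed

lemma arcosh_le:
  fixes c X :: real
  assumes "c \<ge> 1" "X \<ge> 0" "c \<le> cosh X"
  shows "arcosh c \<le> X"
proof -
  have "1 \<le> cosh X" using assms by linarith
  then have "\<not> arcosh (cosh X) < arcosh c" using assms by simp
  then show ?thesis using arcosh_cosh_real[OF assms(2)] by simp
qed

lemma triangle_o:
  assumes U: "U \<in> hyperboloid" and V: "V \<in> hyperboloid"
  shows "hyp_dist U V \<le> hyp_dist U (1, 0) + hyp_dist (1, 0) V"
proof -
  define A where "A = fst U"
  define B where "B = fst V"
  have A1: "A \<ge> 1" and B1: "B \<ge> 1" using hyp_fst_ge1[OF U] hyp_fst_ge1[OF V] by (auto simp: A_def B_def)
  have nU: "norm (snd U) = sqrt (A^2 - 1)"
    using U by (simp add: hyp_mem A_def)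
  have nV: "norm (snd V) = sqrt (B^2 - 1)"
    using V by (simp add: hyp_mem B_def)
  have d1: "hyp_dist U (1, 0) = arcosh A" by (simp add: hyp_dist_def lorentz_o A_def)
  have d2: "hyp_dist (1, 0) V = arcosh B"
    by (simp add: hyp_dist_def lorentz_inner_sym[of "(1,0)"] lorentz_o B_def)
  have "- lorentz_inner U V = A * B - snd U \<bullet> snd V"
    by (simp add: lorentz_inner_def A_def B_def)
  also have "\<dots> \<le> A * B + norm (snd U) * norm (snd V)"
    using norm_cauchy_schwarz[of "- snd U" "snd V"] by simp
  also have "\<dots> = cosh (arcosh A + arcosh B)"
    using A1 B1 by (simp add: cosh_add sinh_arcosh_real nU nV)
  finally have le: "- lorentz_inner U V \<le> cosh (arcosh A + arcosh B)" .
  have "hyp_dist U V \<le> arcosh A + arcosh B"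
    unfolding hyp_dist_def
    by (rule arcosh_le[OF inner_ge1[OF U V] _ le]) (use A1 B1 in auto)
  then show ?thesis using d1 d2 by simp
qed

lemma triangle:
  assumes u: "u \<in> hyperboloid" and v: "v \<in> hyperboloid" and w: "w \<in> hyperboloid"
  shows "hyp_dist u w \<le> hyp_dist u v + hyp_dist v w"
proof -
  obtain g where g: "hyp_iso g" "g v = (1, 0)" using reach_iso[OF v] by blast
  have "g u \<in> hyperboloid" "g w \<in> hyperboloid" using g u w by (auto simp: hyp_iso_def)
  from triangle_o[OF this] g show ?thesis by (metis hyp_iso_dist)
qed

lemma hyp_dist_sym: "hyp_dist u v = hyp_dist v u"
  by (simp add: hyp_dist_def lorentz_inner_sym)

lemma arcosh_meas: "(arcosh :: real \<Rightarrow> real) \<in> borel_measurable borel"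
  unfolding arcosh_def[abs_def] by simp

lemma hyp_dist_meas[measurable]: "(\<lambda>z. hyp_dist z p) \<in> borel_measurable borel"
proof -
  have "(\<lambda>z. - lorentz_inner z p) \<in> borel_measurable borel"
    unfolding lorentz_inner_def by (intro borel_measurable_continuous_onI continuous_intros)
  from measurable_compose[OF this arcosh_meas] show ?thesis unfolding hyp_dist_def .
qed

lemma norm_iso:
  assumes g: "hyp_iso g" and eps: "eps > 0"
  shows "hyp_laplace_norm eps (g x) = hyp_laplace_norm eps x"
proof -
  have "hyp_laplace_norm eps (g x) = (\<integral>\<^sup>+ z. ennreal (exp (- eps * hyp_dist (g z) (g x))) \<partial>hyp_volume)"
    unfolding hyp_laplace_norm_def
    by (rule hyp_iso_int[OF g, symmetric]) measurable
  also have "\<dots> = hyp_laplace_norm eps x"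
    unfolding hyp_laplace_norm_def using hyp_iso_dist[OF g] by simp
  finally show ?thesis .
qed

lemma norm_const:
  fixes x :: "real \<times> 'a::euclidean_space"
  assumes x: "x \<in> hyperboloid" and eps: "eps > 0"
  shows "hyp_laplace_norm eps x = hyp_laplace_norm eps (1, 0::'a)"
proof -
  obtain g where g: "hyp_iso g" "g x = (1, 0)" using reach_iso[OF x] by blast
  then show ?thesis using norm_iso[OF g(1) eps, of x] by simp
qed

lemma one_norm_ne: "1 + (norm (y::'a::euclidean_space))^2 \<noteq> 0"
  by (metis add_pos_nonneg zero_less_one zero_le_power2 less_irrefl)

lemma norm_pos: "hyp_laplace_norm eps x \<noteq> 0"
proof
  assume "hyp_laplace_norm eps x = 0"
  then have "(\<integral>\<^sup>+ y. rho y * ennreal (exp (- eps * hyp_dist (hyp_lift y) x)) \<partial>lborel) = 0"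
    unfolding hyp_laplace_norm_def by (subst (asm) hyp_volume_chart) auto
  then have "AE y in lborel. rho y * ennreal (exp (- eps * hyp_dist (hyp_lift y) x)) = 0"
    by (subst (asm) nn_integral_0_iff_AE) auto
  then have "AE y in lborel. y \<notin> (UNIV :: 'a set)"
    by eventually_elim (simp add: rho_def one_norm_ne)
  then have "UNIV \<in> null_sets (lborel :: 'a measure)"
    by (subst AE_iff_null_sets) auto
  then have "emeasure (lborel :: 'a measure) UNIV = 0" by (rule null_setsD1)
  then show False by simp
qed


lemma sets_hyp_volume[measurable_cong]: "sets hyp_volume = sets borel"
  by (simp add: hyp_volume_def)

lemma space_hyp_laplace: "space (hyp_laplace eps p) = UNIV"
  by (simp add: hyp_laplace_def hyp_volume_def)

lemma sets_hyp_laplace: "sets (hyp_laplace eps p) = sets borel"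
  by (simp add: hyp_laplace_def hyp_volume_def)

lemma emeasure_hyp_laplace:
  fixes p :: "real \<times> 'a::euclidean_space"
  assumes A[measurable]: "A \<in> sets borel"
  shows "emeasure (hyp_laplace eps p) A = (\<integral>\<^sup>+ y. rho y * (ennreal (exp (- eps * hyp_dist (hyp_lift y) p)) / hyp_laplace_norm eps p * indicator A (hyp_lift y)) \<partial>lborel)"
proof -
  have "emeasure (hyp_laplace eps p) A = (\<integral>\<^sup>+ z. ennreal (exp (- eps * hyp_dist z p)) / hyp_laplace_norm eps p * indicator A z \<partial>hyp_volume)"
    unfolding hyp_laplace_def by (rule emeasure_density) measurable
  also have "\<dots> = (\<integral>\<^sup>+ y. rho y * (ennreal (exp (- eps * hyp_dist (hyp_lift y) p)) / hyp_laplace_norm eps p * indicator A (hyp_lift y)) \<partial>lborel)"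
    by (rule hyp_volume_chart) measurable
  finally show ?thesis .
qed

lemma total_hyp_laplace:
  fixes p :: "real \<times> 'a::euclidean_space"
  assumes "hyp_laplace_norm eps p < \<infinity>"
  shows "emeasure (hyp_laplace eps p) UNIV = 1"
proof -
  have "emeasure (hyp_laplace eps p) UNIV = (\<integral>\<^sup>+ z. ennreal (exp (- eps * hyp_dist z p)) / hyp_laplace_norm eps p * indicator UNIV z \<partial>hyp_volume)"
    unfolding hyp_laplace_def by (rule emeasure_density) measurable
  also have "\<dots> = (\<integral>\<^sup>+ z. ennreal (exp (- eps * hyp_dist z p)) / hyp_laplace_norm eps p \<partial>hyp_volume)"
    by simp
  also have "\<dots> = hyp_laplace_norm eps p / hyp_laplace_norm eps p"
    unfolding hyp_laplace_norm_def by (rule nn_integral_divide) measurable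
  also have "\<dots> = 1" using assms norm_pos[of eps p] by simp
  finally show ?thesis .
qed

theorem mainTheorem1:
  fixes W :: "'w::linorder set"
    and \<phi> :: "'w \<Rightarrow> real \<times> 'a::euclidean_space"
    and \<epsilon> :: real
  assumes "finite W"
    and "\<forall>u \<in> W. \<phi> u \<in> hyperboloid"
    and "\<epsilon> > 0"
    and "\<forall>x \<in> (hyperboloid :: (real \<times> 'a) set).
           (\<integral>\<^sup>+ z. ennreal (exp (- \<epsilon> * hyp_dist z x)) \<partial>hyp_volume) < \<infinity>"
    and "w \<in> W" and "w' \<in> W" and "w_hat \<in> W"
  shows "mech_prob \<epsilon> W \<phi> w w_hat
           \<le> exp (\<epsilon> * hyp_dist (\<phi> w) (\<phi> w')) * mech_prob \<epsilon> W \<phi> w' w_hat"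
proof -
  have eps: "\<epsilon> > 0" by fact
  have xH: "\<phi> w \<in> hyperboloid" "\<phi> w' \<in> hyperboloid" using assms by auto
  define N where "N = hyp_laplace_norm \<epsilon> (\<phi> w)"
  have NN: "hyp_laplace_norm \<epsilon> (\<phi> w') = N"
    using norm_const[OF xH(1) eps] norm_const[OF xH(2) eps] by (simp add: N_def)
  have Nfin: "N < \<infinity>" using assms(4) xH(1) by (simp add: N_def hyp_laplace_norm_def)
  define A where "A = {z. nearest_word W \<phi> z = w_hat}"
  have mp: "mech_prob \<epsilon> W \<phi> v w_hat = measure (hyp_laplace \<epsilon> (\<phi> v)) A" for v
    by (simp add: mech_prob_def space_hyp_laplace A_def)
  show ?thesis
  proof (cases "A \<in> sets borel")
    case False
    then have "A \<notin> sets (hyp_laplace \<epsilon> p)" for p by (simp add: sets_hyp_laplace)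
    then show ?thesis using mp by (simp add: measure_notin_sets)
  next
    case True
    note [measurable] = True
    define D where "D = hyp_dist (\<phi> w) (\<phi> w')"
    define E where "E = ennreal (exp (\<epsilon> * D))"
    define f where "f p z = ennreal (exp (- \<epsilon> * hyp_dist z p))" for p z :: "real \<times> 'a"
    have fm[measurable]: "f p \<in> borel_measurable borel" for p unfolding f_def by measurable
    have pw: "rho y * (f (\<phi> w) (hyp_lift y) / N * indicator A (hyp_lift y))
        \<le> E * (rho y * (f (\<phi> w') (hyp_lift y) / N * indicator A (hyp_lift y)))" for y
    proof -
      define z where "z = hyp_lift y"
      have zH: "z \<in> hyperboloid" by (simp add: z_def hyp_lift_mem)
      have tri: "hyp_dist z (\<phi> w') \<le> hyp_dist z (\<phi> w) + D"
        unfolding D_def by (rule triangle[OF zH xH])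
      have "- \<epsilon> * hyp_dist z (\<phi> w) \<le> \<epsilon> * D + (- \<epsilon> * hyp_dist z (\<phi> w'))"
        using mult_left_mono[OF tri, of \<epsilon>] eps by (simp add: algebra_simps)
      then have "exp (- \<epsilon> * hyp_dist z (\<phi> w)) \<le> exp (\<epsilon> * D) * exp (- \<epsilon> * hyp_dist z (\<phi> w'))"
        by (simp add: exp_add[symmetric])
      then have "f (\<phi> w) z \<le> E * f (\<phi> w') z"
        unfolding f_def E_def by (simp add: ennreal_mult[symmetric] ennreal_leI)
      then have "f (\<phi> w) z / N \<le> E * (f (\<phi> w') z / N)"
        by (metis divide_right_mono_ennreal ennreal_times_divide)
      then have "rho y * (f (\<phi> w) z / N * indicator A z) \<le> rho y * ((E * (f (\<phi> w') z / N)) * indicator A z)"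
        by (intro mult_left_mono mult_right_mono) auto
      also have "\<dots> = E * (rho y * (f (\<phi> w') z / N * indicator A z))"
        by (simp add: ac_simps)
      finally show ?thesis by (simp add: z_def)
    qed
    have em1: "emeasure (hyp_laplace \<epsilon> (\<phi> w)) A = (\<integral>\<^sup>+ y. rho y * (f (\<phi> w) (hyp_lift y) / N * indicator A (hyp_lift y)) \<partial>lborel)"
      by (simp add: emeasure_hyp_laplace f_def N_def)
    have em2: "emeasure (hyp_laplace \<epsilon> (\<phi> w')) A = (\<integral>\<^sup>+ y. rho y * (f (\<phi> w') (hyp_lift y) / N * indicator A (hyp_lift y)) \<partial>lborel)"
      by (simp add: emeasure_hyp_laplace f_def NN)
    have le: "emeasure (hyp_laplace \<epsilon> (\<phi> w)) A \<le> E * emeasure (hyp_laplace \<epsilon> (\<phi> w')) A"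
    proof -
      have "emeasure (hyp_laplace \<epsilon> (\<phi> w)) A \<le> (\<integral>\<^sup>+ y. E * (rho y * (f (\<phi> w') (hyp_lift y) / N * indicator A (hyp_lift y))) \<partial>lborel)"
        unfolding em1 by (rule nn_integral_mono) (rule pw)
      also have "\<dots> = E * emeasure (hyp_laplace \<epsilon> (\<phi> w')) A"
        unfolding em2 by (rule nn_integral_cmult) measurable
      finally show ?thesis .
    qed
    have fin: "emeasure (hyp_laplace \<epsilon> (\<phi> w')) A < \<infinity>"
    proof -
      have "emeasure (hyp_laplace \<epsilon> (\<phi> w')) A \<le> emeasure (hyp_laplace \<epsilon> (\<phi> w')) UNIV"
        by (rule emeasure_mono) (auto simp: sets_hyp_laplace)
      also have "\<dots> = 1" by (rule total_hyp_laplace) (use NN Nfin in simp)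
      finally show ?thesis by (simp add: order_le_less_trans)
    qed
    have Efin: "E < \<infinity>" by (simp add: E_def)
    have "measure (hyp_laplace \<epsilon> (\<phi> w)) A \<le> enn2real (E * emeasure (hyp_laplace \<epsilon> (\<phi> w')) A)"
      unfolding measure_def
      by (rule enn2real_mono[OF le]) (use fin Efin in \<open>simp add: ennreal_mult_less_top\<close>)
    also have "\<dots> = exp (\<epsilon> * D) * measure (hyp_laplace \<epsilon> (\<phi> w')) A"
      by (simp add: enn2real_mult E_def measure_def)
    finally show ?thesis by (simp add: mp D_def)
  qed
qed

end
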